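(* Let $R$ be an s-unital ring and let $(P,Q,\psi)$ be an s-unital $R$-system. Suppose that $(S,T,\sigma,B)$ is a semi-full covariant representation of $(P,Q,\psi)$, that $(P,Q,\psi)$ satisfies Condition (FS), and that the ideal $I^{(k)}_{\psi,\sigma}$ of $B_0$ is s-unital for every $k\ge0$. Then $B$ is nearly epsilon-strongly $\mathbb{Z}$-graded.
   Context: Rings are associative, not necessarily unital; for additive subsets $X,Y$ of a ring, $XY$ is the additive subgroup generated by products $xy$. For rings $A,B$, an $A$-$B$-bimodule $M$ is s-unital if for every $x\in M$ there are $a\in A,b\in B$ with $ax=x=xb$. A ring $R$ is s-unital if it is s-unital as an $R$-$R$-bimodule; an ideal is s-unital if it is s-unital as a ring. A $\mathbb{Z}$-graded ring $B=\bigoplus_iB_i$ is nearly epsilon-strongly graded if each $B_i$ is an s-unital $B_iB_{-i}$-$B_{-i}B_i$-bimodule. An $R$-system is a triple $(P,Q,\psi)$ with $P,Q$ $R$-bimodules and $\psi:P\otimes_RQ\to R$ an $R$-bimodule homomorphism; it is s-unital if $R$ is s-unital and $P,Q$ are s-unital $R$-$R$-bimodules. Put $P^{\otimes0}=Q^{\otimes0}=R$, $\psi_0(r\otimes r')=rr'$, $\psi_1=\psi$, and for $n>1$: $Q^{\otimes n}=Q^{\otimes(n-1)}\otimes_RQ$, $P^{\otimes n}=P\otimes_RP^{\otimes(n-1)}$, $\psi_n((p_1\otimes p_2)\otimes(q_2\otimes q_1))=\psi(p_1\psi_{n-1}(p_2\otimes q_2)\otimes q_1)$. A covariant representation is a tuple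 $(S,T,\sigma,B)$ with $B$ a ring, $S:P\to B$, $T:Q\to B$ additive maps, $\sigma:R\to B$ a ring homomorphism, with $S(pr)=S(p)\sigma(r)$, $S(rp)=\sigma(r)S(p)$, $T(qr)=T(q)\sigma(r)$, $T(rq)=\sigma(r)T(q)$, $\sigma(\psi(p\otimes q))=S(p)T(q)$. It is graded if $B$ is generated as a ring by $\sigma(R)\cup S(P)\cup T(Q)$ and $B$ carries a $\mathbb{Z}$-grading with $\sigma(R)\subseteq B_0$, $T(Q)\subseteq B_1$, $S(P)\subseteq B_{-1}$. For a graded covariant representation and $k\ge0$, $I^{(k)}_{\psi,\sigma}$ is the ideal of $B_0$ generated by $\{\sigma(\psi_k(p\otimes q)):p\in P^{\otimes k},q\in Q^{\otimes k}\}$; the (graded) representation is semi-full if $B_{-k}B_k=I^{(k)}_{\psi,\sigma}$ for all $k\ge0$. For $q\in Q,p\in P$ let $\theta_{q,p}(x)=q\psi(p\otimes x)$ ($x\in Q$) and $\theta_{p,q}(y)=\psi(y\otimes q)p$ ($y\in P$); $\mathcal{F}_P(Q)$, $\mathcal{F}_Q(P)$ are the additive groups generated by these maps. Condition (FS): for all finite sets $\{q_i\}\subseteq Q$, $\{p_j\}\subseteq P$ there are $\Theta\in\mathcal{F}_P(Q)$, $\Phi\in\mathcal{F}_Q(P)$ with $\Theta(q_i)=q_i$, $\Phi(p_j)=p_j$. *)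

theory Defs
  imports Main
begin

(* Rings: Isabelle's type class ring is associative and NOT necessarily unital. *)

inductive_set addgen :: "'a::ab_group_add set \<Rightarrow> 'a set" for X where
  gen: "x \<in> X \<Longrightarrow> x \<in> addgen X"
| zero: "0 \<in> addgen X"
| add: "x \<in> addgen X \<Longrightarrow> y \<in> addgen X \<Longrightarrow> x + y \<in> addgen X"
| neg: "x \<in> addgen X \<Longrightarrow> - x \<in> addgen X"

inductive_set fungen :: "('a \<Rightarrow> 'a::ab_group_add) set \<Rightarrow> ('a \<Rightarrow> 'a) set" for G where
  gen: "f \<in> G \<Longrightarrow> f \<in> fungen G"
| zero: "(\<lambda>x. 0) \<in> fungen G"
| add: "f \<in> fungen G \<Longrightarrow> g \<in> fungen G \<Longrightarrow> (\<lambda>x. f x + g x) \<in> fungen G"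
| neg: "f \<in> fungen G \<Longrightarrow> (\<lambda>x. - f x) \<in> fungen G"

definition setmul :: "'a::ring set \<Rightarrow> 'a set \<Rightarrow> 'a set" where
  "setmul X Y = addgen {x * y | x y. x \<in> X \<and> y \<in> Y}"

inductive_set subring_gen :: "'a::ring set \<Rightarrow> 'a set" for X where
  gen: "x \<in> X \<Longrightarrow> x \<in> subring_gen X"
| zero: "0 \<in> subring_gen X"
| add: "x \<in> subring_gen X \<Longrightarrow> y \<in> subring_gen X \<Longrightarrow> x + y \<in> subring_gen X"
| neg: "x \<in> subring_gen X \<Longrightarrow> - x \<in> subring_gen X"
| mul: "x \<in> subring_gen X \<Longrightarrow> y \<in> subring_gen X \<Longrightarrow> x * y \<in> subring_gen X"

definition additive :: "('a::ab_group_add \<Rightarrow> 'b::ab_group_add) \<Rightarrow> bool" where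
  "additive f \<longleftrightarrow> (\<forall>x y. f (x + y) = f x + f y)"

definition ring_hom_nu :: "('a::ring \<Rightarrow> 'b::ring) \<Rightarrow> bool" where
  "ring_hom_nu f \<longleftrightarrow> additive f \<and> (\<forall>x y. f (x * y) = f x * f y)"

definition s_unital_ring :: "'a::ring itself \<Rightarrow> bool" where
  "s_unital_ring _ \<longleftrightarrow> (\<forall>x::'a. \<exists>a b. a * x = x \<and> x * b = x)"

definition bimodule :: "('r::ring \<Rightarrow> 'm::ab_group_add \<Rightarrow> 'm) \<Rightarrow> ('m \<Rightarrow> 'r \<Rightarrow> 'm) \<Rightarrow> bool" where
  "bimodule la ra \<longleftrightarrow>
     (\<forall>r x y. la r (x + y) = la r x + la r y) \<and>
     (\<forall>r s x. la (r + s) x = la r x + la s x) \<and>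
     (\<forall>r s x. la (r * s) x = la r (la s x)) \<and>
     (\<forall>r x y. ra (x + y) r = ra x r + ra y r) \<and>
     (\<forall>r s x. ra x (r + s) = ra x r + ra x s) \<and>
     (\<forall>r s x. ra x (r * s) = ra (ra x r) s) \<and>
     (\<forall>r s x. ra (la r x) s = la r (ra x s))"

definition s_unital_bimodule :: "('r::ring \<Rightarrow> 'm::ab_group_add \<Rightarrow> 'm) \<Rightarrow> ('m \<Rightarrow> 'r \<Rightarrow> 'm) \<Rightarrow> bool" where
  "s_unital_bimodule la ra \<longleftrightarrow> (\<forall>x. \<exists>a b. la a x = x \<and> ra x b = x)"

(* An R-bimodule homomorphism psi : P \<otimes>_R Q \<rightarrow> R, given (by the universal property of
   the tensor product) as an R-balanced biadditive map P \<times> Q \<rightarrow> R that is compatible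
   with the outer bimodule actions. *)
definition system_map ::
  "('r::ring \<Rightarrow> 'p::ab_group_add \<Rightarrow> 'p) \<Rightarrow> ('p \<Rightarrow> 'r \<Rightarrow> 'p) \<Rightarrow>
   ('r \<Rightarrow> 'q::ab_group_add \<Rightarrow> 'q) \<Rightarrow> ('q \<Rightarrow> 'r \<Rightarrow> 'q) \<Rightarrow> ('p \<Rightarrow> 'q \<Rightarrow> 'r) \<Rightarrow> bool" where
  "system_map lP rP lQ rQ psi \<longleftrightarrow>
     (\<forall>p p' q. psi (p + p') q = psi p q + psi p' q) \<and>
     (\<forall>p q q'. psi p (q + q') = psi p q + psi p q') \<and>
     (\<forall>p r q. psi (rP p r) q = psi p (lQ r q)) \<and>
     (\<forall>r p q. psi (lP r p) q = r * psi p q) \<and>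
     (\<forall>p q r. psi p (rQ q r) = psi p q * r)"

definition R_system ::
  "('r::ring \<Rightarrow> 'p::ab_group_add \<Rightarrow> 'p) \<Rightarrow> ('p \<Rightarrow> 'r \<Rightarrow> 'p) \<Rightarrow>
   ('r \<Rightarrow> 'q::ab_group_add \<Rightarrow> 'q) \<Rightarrow> ('q \<Rightarrow> 'r \<Rightarrow> 'q) \<Rightarrow> ('p \<Rightarrow> 'q \<Rightarrow> 'r) \<Rightarrow> bool" where
  "R_system lP rP lQ rQ psi \<longleftrightarrow> bimodule lP rP \<and> bimodule lQ rQ \<and> system_map lP rP lQ rQ psi"

definition s_unital_R_system ::
  "('r::ring \<Rightarrow> 'p::ab_group_add \<Rightarrow> 'p) \<Rightarrow> ('p \<Rightarrow> 'r \<Rightarrow> 'p) \<Rightarrow>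
   ('r \<Rightarrow> 'q::ab_group_add \<Rightarrow> 'q) \<Rightarrow> ('q \<Rightarrow> 'r \<Rightarrow> 'q) \<Rightarrow> ('p \<Rightarrow> 'q \<Rightarrow> 'r) \<Rightarrow> bool" where
  "s_unital_R_system lP rP lQ rQ psi \<longleftrightarrow>
     R_system lP rP lQ rQ psi \<and> s_unital_ring TYPE('r) \<and>
     s_unital_bimodule lP rP \<and> s_unital_bimodule lQ rQ"

(* psi_n on simple tensors, n \<ge> 1.  The list [p1,...,pn] stands for
   p1 \<otimes> (p2 \<otimes> ... \<otimes> pn) \<in> P^{\<otimes>n} and the list [q1,...,qn] stands for
   ((qn \<otimes> ...) \<otimes> q2) \<otimes> q1 \<in> Q^{\<otimes>n}, so that
   psi_n((p1 \<otimes> p') \<otimes> (q' \<otimes> q1)) = psi(p1 psi_{n-1}(p' \<otimes> q') \<otimes> q1). *)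
fun psiL :: "('p \<Rightarrow> 'r \<Rightarrow> 'p) \<Rightarrow> ('p \<Rightarrow> 'q \<Rightarrow> 'r) \<Rightarrow> 'p list \<Rightarrow> 'q list \<Rightarrow> 'r" where
  "psiL rP psi [p] [q] = psi p q"
| "psiL rP psi (p # p2 # ps) (q # q2 # qs) = psi (rP p (psiL rP psi (p2 # ps) (q2 # qs))) q"

(* generators sigma(psi_k(p \<otimes> q)) of I^{(k)}; since sigma \<circ> psi_k is additive it suffices
   to take simple tensors p, q.  For k = 0, psi_0(r \<otimes> r') = r r'. *)
definition psi_gens ::
  "('r::ring \<Rightarrow> 'b::ring) \<Rightarrow> ('p \<Rightarrow> 'r \<Rightarrow> 'p) \<Rightarrow> ('p \<Rightarrow> 'q \<Rightarrow> 'r) \<Rightarrow> nat \<Rightarrow> 'b set" where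
  "psi_gens sigma rP psi k =
     (if k = 0 then {sigma (r * r') | r r'. True}
      else {sigma (psiL rP psi ps qs) | ps qs. length ps = k \<and> length qs = k})"

definition ideal_in :: "'b::ring set \<Rightarrow> 'b set \<Rightarrow> bool" where
  "ideal_in B0 I \<longleftrightarrow> I \<subseteq> B0 \<and> 0 \<in> I \<and> (\<forall>x\<in>I. \<forall>y\<in>I. x + y \<in> I) \<and> (\<forall>x\<in>I. - x \<in> I) \<and>
     (\<forall>b\<in>B0. \<forall>x\<in>I. b * x \<in> I \<and> x * b \<in> I)"

definition ideal_gen :: "'b::ring set \<Rightarrow> 'b set \<Rightarrow> 'b set" where
  "ideal_gen B0 X = \<Inter>{I. ideal_in B0 I \<and> X \<subseteq> I}"

definition I_k ::
  "(int \<Rightarrow> 'b::ring set) \<Rightarrow> ('r::ring \<Rightarrow> 'b) \<Rightarrow> ('p \<Rightarrow> 'r \<Rightarrow> 'p) \<Rightarrow> ('p \<Rightarrow> 'q \<Rightarrow> 'r) \<Rightarrow> nat \<Rightarrow> 'b set"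
  where "I_k Bi sigma rP psi k = ideal_gen (Bi 0) (psi_gens sigma rP psi k)"

definition s_unital_set :: "'b::ring set \<Rightarrow> bool" where
  "s_unital_set I \<longleftrightarrow> (\<forall>x\<in>I. \<exists>a\<in>I. \<exists>b\<in>I. a * x = x \<and> x * b = x)"

definition Z_grading :: "(int \<Rightarrow> 'b::ring set) \<Rightarrow> bool" where
  "Z_grading Bi \<longleftrightarrow>
     (\<forall>i. 0 \<in> Bi i \<and> (\<forall>x\<in>Bi i. \<forall>y\<in>Bi i. x + y \<in> Bi i) \<and> (\<forall>x\<in>Bi i. - x \<in> Bi i)) \<and>
     (\<forall>i j. \<forall>x\<in>Bi i. \<forall>y\<in>Bi j. x * y \<in> Bi (i + j)) \<and>
     (\<forall>b. \<exists>!f. (\<forall>i. f i \<in> Bi i) \<and> finite {i. f i \<noteq> 0} \<and> b = sum f {i. f i \<noteq> 0})"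

definition covariant_rep ::
  "('r::ring \<Rightarrow> 'p::ab_group_add \<Rightarrow> 'p) \<Rightarrow> ('p \<Rightarrow> 'r \<Rightarrow> 'p) \<Rightarrow>
   ('r \<Rightarrow> 'q::ab_group_add \<Rightarrow> 'q) \<Rightarrow> ('q \<Rightarrow> 'r \<Rightarrow> 'q) \<Rightarrow> ('p \<Rightarrow> 'q \<Rightarrow> 'r) \<Rightarrow>
   ('p \<Rightarrow> 'b::ring) \<Rightarrow> ('q \<Rightarrow> 'b) \<Rightarrow> ('r \<Rightarrow> 'b) \<Rightarrow> bool" where
  "covariant_rep lP rP lQ rQ psi S T sigma \<longleftrightarrow>
     additive S \<and> additive T \<and> ring_hom_nu sigma \<and>
     (\<forall>p r. S (rP p r) = S p * sigma r) \<and> (\<forall>r p. S (lP r p) = sigma r * S p) \<and>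
     (\<forall>q r. T (rQ q r) = T q * sigma r) \<and> (\<forall>r q. T (lQ r q) = sigma r * T q) \<and>
     (\<forall>p q. sigma (psi p q) = S p * T q)"

definition graded_cov_rep ::
  "('r::ring \<Rightarrow> 'p::ab_group_add \<Rightarrow> 'p) \<Rightarrow> ('p \<Rightarrow> 'r \<Rightarrow> 'p) \<Rightarrow>
   ('r \<Rightarrow> 'q::ab_group_add \<Rightarrow> 'q) \<Rightarrow> ('q \<Rightarrow> 'r \<Rightarrow> 'q) \<Rightarrow> ('p \<Rightarrow> 'q \<Rightarrow> 'r) \<Rightarrow>
   ('p \<Rightarrow> 'b::ring) \<Rightarrow> ('q \<Rightarrow> 'b) \<Rightarrow> ('r \<Rightarrow> 'b) \<Rightarrow> (int \<Rightarrow> 'b set) \<Rightarrow> bool" where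
  "graded_cov_rep lP rP lQ rQ psi S T sigma Bi \<longleftrightarrow>
     covariant_rep lP rP lQ rQ psi S T sigma \<and>
     subring_gen (range sigma \<union> range S \<union> range T) = UNIV \<and>
     Z_grading Bi \<and> range sigma \<subseteq> Bi 0 \<and> range T \<subseteq> Bi 1 \<and> range S \<subseteq> Bi (-1)"

definition semi_full ::
  "('r::ring \<Rightarrow> 'p::ab_group_add \<Rightarrow> 'p) \<Rightarrow> ('p \<Rightarrow> 'r \<Rightarrow> 'p) \<Rightarrow>
   ('r \<Rightarrow> 'q::ab_group_add \<Rightarrow> 'q) \<Rightarrow> ('q \<Rightarrow> 'r \<Rightarrow> 'q) \<Rightarrow> ('p \<Rightarrow> 'q \<Rightarrow> 'r) \<Rightarrow>
   ('p \<Rightarrow> 'b::ring) \<Rightarrow> ('q \<Rightarrow> 'b) \<Rightarrow> ('r \<Rightarrow> 'b) \<Rightarrow> (int \<Rightarrow> 'b set) \<Rightarrow> bool" where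
  "semi_full lP rP lQ rQ psi S T sigma Bi \<longleftrightarrow>
     graded_cov_rep lP rP lQ rQ psi S T sigma Bi \<and>
     (\<forall>k::nat. setmul (Bi (- int k)) (Bi (int k)) = I_k Bi sigma rP psi k)"

definition F_P_Q :: "('q \<Rightarrow> 'r \<Rightarrow> 'q::ab_group_add) \<Rightarrow> ('p \<Rightarrow> 'q \<Rightarrow> 'r) \<Rightarrow> ('q \<Rightarrow> 'q) set" where
  "F_P_Q rQ psi = fungen {(\<lambda>x. rQ q (psi p x)) | q p. True}"

definition F_Q_P :: "('r \<Rightarrow> 'p::ab_group_add \<Rightarrow> 'p) \<Rightarrow> ('p \<Rightarrow> 'q \<Rightarrow> 'r) \<Rightarrow> ('p \<Rightarrow> 'p) set" where
  "F_Q_P lP psi = fungen {(\<lambda>y. lP (psi y q) p) | p q. True}"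

definition condition_FS ::
  "('r \<Rightarrow> 'p::ab_group_add \<Rightarrow> 'p) \<Rightarrow> ('q \<Rightarrow> 'r \<Rightarrow> 'q::ab_group_add) \<Rightarrow> ('p \<Rightarrow> 'q \<Rightarrow> 'r) \<Rightarrow> bool" where
  "condition_FS lP rQ psi \<longleftrightarrow>
     (\<forall>Qs Ps. finite Qs \<and> finite Ps \<longrightarrow>
        (\<exists>\<Theta>\<in>F_P_Q rQ psi. \<exists>\<Phi>\<in>F_Q_P lP psi. (\<forall>q\<in>Qs. \<Theta> q = q) \<and> (\<forall>p\<in>Ps. \<Phi> p = p)))"

(* B_i is an s-unital B_iB_{-i}-B_{-i}B_i-bimodule for every i *)
definition nearly_epsilon_strongly_graded :: "(int \<Rightarrow> 'b::ring set) \<Rightarrow> bool" where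
  "nearly_epsilon_strongly_graded Bi \<longleftrightarrow> Z_grading Bi \<and>
     (\<forall>i. \<forall>x\<in>Bi i. (\<exists>a\<in>setmul (Bi i) (Bi (- i)). a * x = x) \<and>
                    (\<exists>b\<in>setmul (Bi (- i)) (Bi i). x * b = x))"

end

theory Submission
  imports Defs
begin


fun Tl :: "('q \<Rightarrow> 'b::ring) \<Rightarrow> 'q list \<Rightarrow> 'b \<Rightarrow> 'b" where
  "Tl T [] y = y" | "Tl T (q#qs) y = T q * Tl T qs y"

fun Sr :: "('p \<Rightarrow> 'b::ring) \<Rightarrow> 'b \<Rightarrow> 'p list \<Rightarrow> 'b" where
  "Sr S y [] = y" | "Sr S y (p#ps) = Sr S (y * S p) ps"

definition nw :: "('q \<Rightarrow> 'b::ring) \<Rightarrow> ('p \<Rightarrow> 'b) \<Rightarrow> ('r \<Rightarrow> 'b) \<Rightarrow> 'q list \<Rightarrow> 'r \<Rightarrow> 'p list \<Rightarrow> 'b" where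
  "nw T S sigma qs r ps = Tl T qs (Sr S (sigma r) ps)"

definition NWk :: "('q \<Rightarrow> 'b::ring) \<Rightarrow> ('p \<Rightarrow> 'b) \<Rightarrow> ('r \<Rightarrow> 'b) \<Rightarrow> int \<Rightarrow> 'b set" where
  "NWk T S sigma k = {nw T S sigma qs r ps | qs r ps. int (length qs) - int (length ps) = k}"

lemma Tl_append: "Tl T (xs@ys) y = Tl T xs (Tl T ys y)"
  by (induct xs) auto

lemma Sr_append: "Sr S y (xs@ys) = Sr S (Sr S y xs) ys"
  by (induct xs arbitrary: y) auto

lemma Sr_snoc: "Sr S y (ps@[p]) = Sr S y ps * S p"
  by (simp add: Sr_append)

lemma Sr_mult_left: "z * Sr S y ps = Sr S (z*y) ps"
  by (induct ps arbitrary: y) (auto simp: mult.assoc)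

lemma Tl_mult_right: "Tl T qs y * z = Tl T qs (y*z)"
  by (induct qs) (auto simp: mult.assoc)

lemma Tl_Sr: "Tl T qs (Sr S y ps) = Sr S (Tl T qs y) ps"
  by (induct qs) (auto simp: Sr_mult_left)

lemma addgen_mono: "X \<subseteq> Y \<Longrightarrow> addgen X \<subseteq> addgen Y"
proof
  fix x assume XY: "X \<subseteq> Y" and xa: "x \<in> addgen X" from xa show "x \<in> addgen Y"
    by (induct rule: addgen.induct) (use XY in \<open>auto intro: addgen.intros\<close>)
qed

lemma addgen_least:
  assumes "X \<subseteq> C" "0 \<in> C" "\<And>x y. x \<in> C \<Longrightarrow> y \<in> C \<Longrightarrow> x + y \<in> C" "\<And>x. x \<in> C \<Longrightarrow> - x \<in> C"
  shows "addgen X \<subseteq> C"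
proof
  fix x assume "x \<in> addgen X" then show "x \<in> C"
    by (induct rule: addgen.induct) (use assms in auto)
qed

lemma addgen_diff: "x \<in> addgen X \<Longrightarrow> y \<in> addgen X \<Longrightarrow> x - y \<in> addgen X"
  by (metis addgen.add addgen.neg diff_conv_add_uminus)

lemma addgen_bilinear:
  fixes X Y :: "'a::ring set"
  assumes x: "x \<in> addgen X" and y: "y \<in> addgen Y"
    and g: "\<And>a b. a \<in> X \<Longrightarrow> b \<in> Y \<Longrightarrow> a * b \<in> addgen Z"
  shows "x * y \<in> addgen Z"
  using x
proof (induct rule: addgen.induct)
  case (gen a)
  from y show ?case
    by (induct rule: addgen.induct)
       (auto intro: addgen.intros g[OF gen] simp: distrib_left)
next
  case zero then show ?case by (simp add: addgen.zero)
next
  case (add a b) then show ?case by (simp add: distrib_right addgen.add)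
next
  case (neg a) then show ?case by (simp add: addgen.neg)
qed

lemma setmul_in: "x \<in> X \<Longrightarrow> y \<in> Y \<Longrightarrow> x * y \<in> setmul X Y"
  unfolding setmul_def by (auto intro: addgen.gen)

lemma setmul_mono: "X \<subseteq> X' \<Longrightarrow> Y \<subseteq> Y' \<Longrightarrow> setmul X Y \<subseteq> setmul X' Y'"
  unfolding setmul_def by (rule addgen_mono) blast

lemma setmul_zero: "0 \<in> setmul X Y" unfolding setmul_def by (rule addgen.zero)
lemma setmul_add: "x \<in> setmul X Y \<Longrightarrow> y \<in> setmul X Y \<Longrightarrow> x + y \<in> setmul X Y"
  unfolding setmul_def by (rule addgen.add)
lemma setmul_neg: "x \<in> setmul X Y \<Longrightarrow> - x \<in> setmul X Y"
  unfolding setmul_def by (rule addgen.neg)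
lemma setmul_diff: "x \<in> setmul X Y \<Longrightarrow> y \<in> setmul X Y \<Longrightarrow> x - y \<in> setmul X Y"
  unfolding setmul_def by (rule addgen_diff)

lemma setmul_induct[consumes 1, case_names gen zero add neg]:
  assumes "a \<in> setmul X Y"
    and "\<And>u v. u \<in> X \<Longrightarrow> v \<in> Y \<Longrightarrow> P (u * v)"
    and "P 0" and "\<And>a b. P a \<Longrightarrow> P b \<Longrightarrow> P (a + b)" and "\<And>a. P a \<Longrightarrow> P (- a)"
  shows "P a"
  using assms(1) unfolding setmul_def
  by (induct rule: addgen.induct) (use assms(2-) in auto)

lemma addgen_left_unit:
  fixes G :: "'a::ring set"
  assumes "x \<in> addgen G"
  shows "\<exists>F. finite F \<and> F \<subseteq> G \<and> (\<forall>a. (\<forall>g\<in>F. a * g = g) \<longrightarrow> a * x = x)"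
  using assms
proof (induct rule: addgen.induct)
  case (gen x) then show ?case by (intro exI[of _ "{x}"]) auto
next
  case zero then show ?case by (intro exI[of _ "{}"]) auto
next
  case (add x y)
  then obtain F1 F2 where "finite F1 \<and> F1 \<subseteq> G \<and> (\<forall>a. (\<forall>g\<in>F1. a * g = g) \<longrightarrow> a * x = x)"
    "finite F2 \<and> F2 \<subseteq> G \<and> (\<forall>a. (\<forall>g\<in>F2. a * g = g) \<longrightarrow> a * y = y)" by blast
  then show ?case by (intro exI[of _ "F1 \<union> F2"]) (auto simp: distrib_left)
next
  case (neg x)
  then obtain F where F: "finite F \<and> F \<subseteq> G \<and> (\<forall>a. (\<forall>g\<in>F. a * g = g) \<longrightarrow> a * x = x)" by blast
  moreover have "\<forall>a. (\<forall>g\<in>F. a * g = g) \<longrightarrow> a * - x = - x"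
  proof (intro allI impI)
    fix a assume "\<forall>g\<in>F. a * g = g"
    then have "a * x = x" using F by blast
    then show "a * - x = - x" by simp
  qed
  ultimately show ?case by blast
qed

lemma addgen_right_unit:
  fixes G :: "'a::ring set"
  assumes "x \<in> addgen G"
  shows "\<exists>F. finite F \<and> F \<subseteq> G \<and> (\<forall>a. (\<forall>g\<in>F. g * a = g) \<longrightarrow> x * a = x)"
  using assms
proof (induct rule: addgen.induct)
  case (gen x) then show ?case by (intro exI[of _ "{x}"]) auto
next
  case zero then show ?case by (intro exI[of _ "{}"]) auto
next
  case (add x y)
  then obtain F1 F2 where "finite F1 \<and> F1 \<subseteq> G \<and> (\<forall>a. (\<forall>g\<in>F1. g * a = g) \<longrightarrow> x * a = x)"
    "finite F2 \<and> F2 \<subseteq> G \<and> (\<forall>a. (\<forall>g\<in>F2. g * a = g) \<longrightarrow> y * a = y)" by blast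
  then show ?case by (intro exI[of _ "F1 \<union> F2"]) (auto simp: distrib_right)
next
  case (neg x)
  then obtain F where F: "finite F \<and> F \<subseteq> G \<and> (\<forall>a. (\<forall>g\<in>F. g * a = g) \<longrightarrow> x * a = x)" by blast
  moreover have "\<forall>a. (\<forall>g\<in>F. g * a = g) \<longrightarrow> - x * a = - x"
  proof (intro allI impI)
    fix a assume "\<forall>g\<in>F. g * a = g"
    then have "x * a = x" using F by blast
    then show "- x * a = - x" by simp
  qed
  ultimately show ?case by blast
qed

(* Tominaga: common units in an s-unital subring *)
lemma common_right_unit:
  fixes I :: "'a::ring set"
  assumes su: "s_unital_set I" and z: "0 \<in> I"
    and ad: "\<And>x y. x \<in> I \<Longrightarrow> y \<in> I \<Longrightarrow> x + y \<in> I"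
    and ng: "\<And>x. x \<in> I \<Longrightarrow> - x \<in> I"
    and ml: "\<And>x y. x \<in> I \<Longrightarrow> y \<in> I \<Longrightarrow> x * y \<in> I"
    and F: "finite F" "F \<subseteq> I"
  shows "\<exists>b\<in>I. \<forall>x\<in>F. x * b = x"
  using F
proof (induct rule: finite_induct)
  case empty then show ?case using z by auto
next
  case (insert x F)
  then obtain b where b: "b \<in> I" "\<forall>y\<in>F. y * b = y" by auto
  have xI: "x \<in> I" using insert by auto
  have dI: "x - x * b \<in> I" unfolding diff_conv_add_uminus by (intro ad ng ml xI b(1))
  then obtain c where c: "c \<in> I" "(x - x * b) * c = x - x * b" using su unfolding s_unital_set_def by blast
  define d where "d = b + c - b * c"
  have dI': "d \<in> I" unfolding d_def diff_conv_add_uminus by (intro ad ng ml b(1) c(1))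
  have "\<forall>y\<in>F. y * d = y"
  proof
    fix y assume "y \<in> F"
    then have yb: "y * b = y" using b by auto
    have "y * d = y * b + y * c - (y * b) * c" unfolding d_def by (simp add: algebra_simps)
    then show "y * d = y" using yb by simp
  qed
  moreover have "x * d = x"
  proof -
    have "x * d = x * b + (x * c - x * b * c)" unfolding d_def by (simp add: algebra_simps)
    also have "x * c - x * b * c = (x - x * b) * c" by (simp add: algebra_simps)
    finally show ?thesis using c by simp
  qed
  ultimately show ?case using dI' by auto
qed

lemma common_left_unit:
  fixes I :: "'a::ring set"
  assumes su: "s_unital_set I" and z: "0 \<in> I"
    and ad: "\<And>x y. x \<in> I \<Longrightarrow> y \<in> I \<Longrightarrow> x + y \<in> I"
    and ng: "\<And>x. x \<in> I \<Longrightarrow> - x \<in> I"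
    and ml: "\<And>x y. x \<in> I \<Longrightarrow> y \<in> I \<Longrightarrow> x * y \<in> I"
    and F: "finite F" "F \<subseteq> I"
  shows "\<exists>b\<in>I. \<forall>x\<in>F. b * x = x"
  using F
proof (induct rule: finite_induct)
  case empty then show ?case using z by auto
next
  case (insert x F)
  then obtain b where b: "b \<in> I" "\<forall>y\<in>F. b * y = y" by auto
  have xI: "x \<in> I" using insert by auto
  have dI: "x - b * x \<in> I" unfolding diff_conv_add_uminus by (intro ad ng ml xI b(1))
  then obtain c where c: "c \<in> I" "c * (x - b * x) = x - b * x" using su unfolding s_unital_set_def by blast
  define d where "d = b + c - c * b"
  have dI': "d \<in> I" unfolding d_def diff_conv_add_uminus by (intro ad ng ml b(1) c(1))
  have "\<forall>y\<in>F. d * y = y"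
  proof
    fix y assume "y \<in> F"
    then have yb: "b * y = y" using b by auto
    have "d * y = b * y + c * y - c * (b * y)" unfolding d_def by (simp add: algebra_simps)
    then show "d * y = y" using yb by simp
  qed
  moreover have "d * x = x"
  proof -
    have "d * x = b * x + (c * x - c * (b * x))" unfolding d_def by (simp add: algebra_simps)
    also have "c * x - c * (b * x) = c * (x - b * x)" by (simp add: algebra_simps)
    finally show ?thesis using c by simp
  qed
  ultimately show ?case using dI' by auto
qed



locale sys =
  fixes lP :: "'r::ring \<Rightarrow> 'p::ab_group_add \<Rightarrow> 'p" and rP :: "'p \<Rightarrow> 'r \<Rightarrow> 'p"
    and lQ :: "'r \<Rightarrow> 'q::ab_group_add \<Rightarrow> 'q" and rQ :: "'q \<Rightarrow> 'r \<Rightarrow> 'q"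
    and psi :: "'p \<Rightarrow> 'q \<Rightarrow> 'r"
    and S :: "'p \<Rightarrow> 'b::ring" and T :: "'q \<Rightarrow> 'b" and sigma :: "'r \<Rightarrow> 'b"
    and Bi :: "int \<Rightarrow> 'b set"
  assumes suR: "\<And>r::'r. \<exists>a. a * r = r"
    and suP: "\<And>p. \<exists>r. lP r p = p"
    and suQl: "\<And>q. \<exists>r. lQ r q = q"
    and suQr: "\<And>q. \<exists>r. rQ q r = q"
    and addS: "\<And>x y. S (x + y) = S x + S y"
    and addT: "\<And>x y. T (x + y) = T x + T y"
    and sig_mul: "\<And>x y. sigma (x * y) = sigma x * sigma y"
    and S_r: "\<And>p r. S (rP p r) = S p * sigma r"
    and S_l: "\<And>r p. S (lP r p) = sigma r * S p"
    and T_r: "\<And>q r. T (rQ q r) = T q * sigma r"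
    and T_l: "\<And>r q. T (lQ r q) = sigma r * T q"
    and S_T: "\<And>p q. sigma (psi p q) = S p * T q"
    and gen_all: "subring_gen (range sigma \<union> range S \<union> range T) = UNIV"
    and grad: "Z_grading Bi"
    and sB: "\<And>r. sigma r \<in> Bi 0" and TB: "\<And>q. T q \<in> Bi 1" and SB: "\<And>p. S p \<in> Bi (-1)"
    and sf: "\<And>k::nat. s_unital_set (setmul (Bi (- int k)) (Bi (int k)))"
    and FS: "condition_FS lP rQ psi"

context sys begin

lemma B_zero: "0 \<in> Bi i" using grad unfolding Z_grading_def by blast
lemma B_add: "x \<in> Bi i \<Longrightarrow> y \<in> Bi i \<Longrightarrow> x + y \<in> Bi i" using grad unfolding Z_grading_def by blast
lemma B_neg: "x \<in> Bi i \<Longrightarrow> - x \<in> Bi i" using grad unfolding Z_grading_def by blast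
lemma B_mul: "x \<in> Bi i \<Longrightarrow> y \<in> Bi j \<Longrightarrow> i + j = l \<Longrightarrow> x * y \<in> Bi l"
  using grad unfolding Z_grading_def by blast

lemma addgen_B: "X \<subseteq> Bi i \<Longrightarrow> addgen X \<subseteq> Bi i"
  by (rule addgen_least) (auto intro: B_zero B_add B_neg)

lemma setmul_B: "X \<subseteq> Bi i \<Longrightarrow> Y \<subseteq> Bi j \<Longrightarrow> setmul X Y \<subseteq> Bi (i + j)"
  unfolding setmul_def by (rule addgen_B) (auto intro: B_mul)

lemma T0: "T 0 = 0" using addT[of 0 0] by simp
lemma S0: "S 0 = 0" using addS[of 0 0] by simp
lemma Tneg: "T (- x) = - T x"
proof -
  have "T (- x) + T x = 0" by (metis addT T0 add.left_inverse)
  then show ?thesis by (simp add: eq_neg_iff_add_eq_0)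
qed
lemma Sneg: "S (- x) = - S x"
proof -
  have "S (- x) + S x = 0" by (metis addS S0 add.left_inverse)
  then show ?thesis by (simp add: eq_neg_iff_add_eq_0)
qed

lemma Tl_B: "y \<in> Bi j \<Longrightarrow> Tl T qs y \<in> Bi (int (length qs) + j)"
proof (induct qs)
  case Nil then show ?case by simp
next
  case (Cons q qs) then show ?case by (auto intro!: B_mul[OF TB])
qed

lemma Sr_B: "y \<in> Bi j \<Longrightarrow> Sr S y ps \<in> Bi (j - int (length ps))"
proof (induct ps arbitrary: y j)
  case Nil then show ?case by simp
next
  case (Cons p ps)
  have "y * S p \<in> Bi (j - 1)" by (rule B_mul[OF Cons(2) SB]) simp
  from Cons(1)[OF this] have "Sr S (y * S p) ps \<in> Bi (j - 1 - int (length ps))" .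
  moreover have "j - 1 - int (length ps) = j - int (length (p # ps))" by simp
  ultimately show ?case by simp
qed

lemma nw_B: "nw T S sigma qs r ps \<in> Bi (int (length qs) - int (length ps))"
  unfolding nw_def using Tl_B[OF Sr_B[OF sB]] by simp

lemma NWk_B: "NWk T S sigma k \<subseteq> Bi k"
  unfolding NWk_def using nw_B by blast

lemma NW_sigma:
  assumes "x \<in> NWk T S sigma k" shows "sigma s * x \<in> NWk T S sigma k"
proof -
  obtain qs r ps where x: "x = nw T S sigma qs r ps" and k: "int (length qs) - int (length ps) = k"
    using assms unfolding NWk_def by blast
  show ?thesis
  proof (cases qs)
    case Nil
    have "sigma s * x = nw T S sigma [] (s * r) ps"
      unfolding x Nil nw_def by (simp add: Sr_mult_left sig_mul)
    then show ?thesis using k Nil unfolding NWk_def by fastforce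
  next
    case (Cons q qs')
    have "sigma s * x = nw T S sigma (lQ s q # qs') r ps"
      unfolding x Cons nw_def by (simp add: T_l mult.assoc)
    then show ?thesis using k Cons unfolding NWk_def by fastforce
  qed
qed

lemma NW_T:
  assumes "x \<in> NWk T S sigma k" shows "T q * x \<in> NWk T S sigma (k + 1)"
proof -
  obtain qs r ps where x: "x = nw T S sigma qs r ps" and k: "int (length qs) - int (length ps) = k"
    using assms unfolding NWk_def by blast
  have "T q * x = nw T S sigma (q # qs) r ps" unfolding x nw_def by simp
  then show ?thesis using k unfolding NWk_def by fastforce
qed

lemma NW_S:
  assumes "x \<in> NWk T S sigma k" shows "S p * x \<in> NWk T S sigma (k - 1)"
proof -
  obtain qs r ps where x: "x = nw T S sigma qs r ps" and k: "int (length qs) - int (length ps) = k"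
    using assms unfolding NWk_def by blast
  show ?thesis
  proof (cases qs)
    case Nil
    obtain r0 where r0: "lP r0 (rP p r) = rP p r" using suP by blast
    have "S p * x = Sr S (S p * sigma r) ps" unfolding x Nil nw_def by (simp add: Sr_mult_left)
    also have "S p * sigma r = sigma r0 * S (rP p r)" by (metis S_l S_r r0)
    also have "Sr S (sigma r0 * S (rP p r)) ps = nw T S sigma [] r0 (rP p r # ps)"
      unfolding nw_def by simp
    finally show ?thesis using k Nil unfolding NWk_def by fastforce
  next
    case (Cons q qs')
    have "S p * x = sigma (psi p q) * nw T S sigma qs' r ps"
      unfolding x Cons nw_def by (simp add: S_T mult.assoc)
    moreover have "nw T S sigma qs' r ps \<in> NWk T S sigma (k - 1)"
      using k Cons unfolding NWk_def by fastforce
    ultimately show ?thesis using NW_sigma by simp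
  qed
qed

lemma Sr_NW_mul:
  "y \<in> NWk T S sigma j \<Longrightarrow> Sr S (sigma r) ps * y \<in> NWk T S sigma (j - int (length ps))"
proof (induct ps arbitrary: y j rule: rev_induct)
  case Nil then show ?case using NW_sigma by simp
next
  case (snoc p ps)
  have "Sr S (sigma r) (ps @ [p]) * y = Sr S (sigma r) ps * (S p * y)"
    by (simp add: Sr_snoc mult.assoc)
  moreover have "S p * y \<in> NWk T S sigma (j - 1)" using NW_S snoc(2) .
  then have "Sr S (sigma r) ps * (S p * y) \<in> NWk T S sigma (j - 1 - int (length ps))" by (rule snoc(1))
  moreover have "j - 1 - int (length ps) = j - int (length (ps @ [p]))" by simp
  ultimately show ?case by simp
qed


lemma NW_mul:
  assumes "x \<in> NWk T S sigma i" "y \<in> NWk T S sigma j" shows "x * y \<in> NWk T S sigma (i + j)"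
proof -
  obtain qs r ps where x: "x = nw T S sigma qs r ps" and k: "int (length qs) - int (length ps) = i"
    using assms unfolding NWk_def by blast
  have "\<And>qs. Tl T qs (Sr S (sigma r) ps) * y \<in> NWk T S sigma (int (length qs) + (j - int (length ps)))"
  proof -
    fix qs show "Tl T qs (Sr S (sigma r) ps) * y \<in> NWk T S sigma (int (length qs) + (j - int (length ps)))"
    proof (induct qs)
      case Nil then show ?case using Sr_NW_mul[OF assms(2)] by simp
    next
      case (Cons q qs)
      have A: "Tl T (q # qs) (Sr S (sigma r) ps) * y = T q * (Tl T qs (Sr S (sigma r) ps) * y)"
        by (simp add: mult.assoc)
      have B: "T q * (Tl T qs (Sr S (sigma r) ps) * y) \<in> NWk T S sigma (int (length qs) + (j - int (length ps)) + 1)"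
        by (rule NW_T[OF Cons])
      have C: "int (length qs) + (j - int (length ps)) + 1 = int (length (q # qs)) + (j - int (length ps))" by simp
      show ?case unfolding A C[symmetric] by (rule B)
    qed
  qed
  then have "Tl T qs (Sr S (sigma r) ps) * y \<in> NWk T S sigma (int (length qs) + (j - int (length ps)))" .
  moreover have "int (length qs) + (j - int (length ps)) = i + j" using k by simp
  ultimately show ?thesis unfolding x nw_def by simp
qed

abbreviation "NWall \<equiv> (\<Union>k. NWk T S sigma k)"

lemma gens_NW: "range sigma \<union> range S \<union> range T \<subseteq> NWall"
proof -
  have "sigma r \<in> NWk T S sigma 0" for r
  proof -
    have "sigma r = nw T S sigma [] r []" unfolding nw_def by simp
    then show ?thesis unfolding NWk_def by fastforce
  qed
  moreover have "S p \<in> NWk T S sigma (-1)" for p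
  proof -
    obtain r0 where r0: "lP r0 p = p" using suP by blast
    have "S p = sigma r0 * S p" using S_l[of r0 p] unfolding r0 .
    then have "S p = nw T S sigma [] r0 [p]" unfolding nw_def by simp
    then show ?thesis unfolding NWk_def by fastforce
  qed
  moreover have "T q \<in> NWk T S sigma 1" for q
  proof -
    obtain r0 where r0: "rQ q r0 = q" using suQr by blast
    have "T q = T q * sigma r0" using T_r[of q r0] unfolding r0 .
    then have "T q = nw T S sigma [q] r0 []" unfolding nw_def by simp
    then show ?thesis unfolding NWk_def by fastforce
  qed
  ultimately show ?thesis by blast
qed

lemma all_NW: "x \<in> addgen NWall"
proof -
  have "x \<in> subring_gen (range sigma \<union> range S \<union> range T)" using gen_all by simp
  then show ?thesis
  proof (induct rule: subring_gen.induct)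
    case (gen x) then have "x \<in> NWall" using gens_NW by blast
    then show ?case by (rule addgen.gen)
  next
    case zero then show ?case by (rule addgen.zero)
  next
    case (add x y) then show ?case by (blast intro: addgen.add)
  next
    case (neg x) then show ?case by (blast intro: addgen.neg)
  next
    case (mul x y)
    show ?case
    proof (rule addgen_bilinear[OF mul(2) mul(4)])
      fix a b assume "a \<in> NWall" "b \<in> NWall"
      then show "a * b \<in> addgen NWall" using NW_mul by (blast intro: addgen.gen)
    qed
  qed
qed

end


context sys begin

lemma sum_support_super:
  fixes f :: "int \<Rightarrow> 'b"
  assumes "finite A" "{i. f i \<noteq> 0} \<subseteq> A"
  shows "sum f {i. f i \<noteq> 0} = sum f A"
  by (rule sum.mono_neutral_left) (use assms in auto)

lemma decomp:
  assumes "x \<in> addgen NWall"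
  shows "\<exists>c. (\<forall>i. c i \<in> addgen (NWk T S sigma i)) \<and> finite {i. c i \<noteq> 0} \<and> x = sum c {i. c i \<noteq> 0}"
  using assms
proof (induct rule: addgen.induct)
  case (gen x)
  then obtain d where d: "x \<in> NWk T S sigma d" by blast
  define c where "c = (\<lambda>i. if i = d then x else 0)"
  have "\<forall>i. c i \<in> addgen (NWk T S sigma i)" unfolding c_def using d by (auto intro: addgen.gen addgen.zero)
  moreover have sup: "{i. c i \<noteq> 0} \<subseteq> {d}" unfolding c_def by auto
  moreover have "finite {i. c i \<noteq> 0}" using sup finite_subset by blast
  moreover have "x = sum c {i. c i \<noteq> 0}"
    using sum_support_super[OF _ sup] unfolding c_def by simp
  ultimately show ?case by blast
next
  case zero
  show ?case by (intro exI[of _ "\<lambda>i. 0"]) (auto intro: addgen.zero)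
next
  case (add x y)
  then obtain c1 c2 where c1: "(\<forall>i. c1 i \<in> addgen (NWk T S sigma i))" "finite {i. c1 i \<noteq> 0}" "x = sum c1 {i. c1 i \<noteq> 0}"
    and c2: "(\<forall>i. c2 i \<in> addgen (NWk T S sigma i))" "finite {i. c2 i \<noteq> 0}" "y = sum c2 {i. c2 i \<noteq> 0}"
    by blast
  define U where "U = {i. c1 i \<noteq> 0} \<union> {i. c2 i \<noteq> 0}"
  have fU: "finite U" unfolding U_def using c1 c2 by auto
  define c where "c = (\<lambda>i. c1 i + c2 i)"
  have supc: "{i. c i \<noteq> 0} \<subseteq> U" unfolding c_def U_def by auto
  have "\<forall>i. c i \<in> addgen (NWk T S sigma i)" unfolding c_def using c1 c2 by (auto intro: addgen.add)
  moreover have "finite {i. c i \<noteq> 0}" using supc fU finite_subset by blast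
  moreover have "x + y = sum c {i. c i \<noteq> 0}"
  proof -
    have "sum c {i. c i \<noteq> 0} = sum c U" by (rule sum_support_super[OF fU supc])
    also have "\<dots> = sum c1 U + sum c2 U" unfolding c_def by (simp add: sum.distrib)
    also have "sum c1 U = x" using c1 sum_support_super[OF fU, of c1] unfolding U_def by auto
    also have "sum c2 U = y" using c2 sum_support_super[OF fU, of c2] unfolding U_def by auto
    finally show ?thesis by simp
  qed
  ultimately show ?case by blast
next
  case (neg x)
  then obtain c1 where c1: "(\<forall>i. c1 i \<in> addgen (NWk T S sigma i))" "finite {i. c1 i \<noteq> 0}" "x = sum c1 {i. c1 i \<noteq> 0}"
    by blast
  define c where "c = (\<lambda>i. - c1 i)"
  have eq: "{i. c i \<noteq> 0} = {i. c1 i \<noteq> 0}" unfolding c_def by auto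
  have "\<forall>i. c i \<in> addgen (NWk T S sigma i)" unfolding c_def using c1 by (auto intro: addgen.neg)
  moreover have "finite {i. c i \<noteq> 0}" using eq c1 by simp
  moreover have "- x = sum c {i. c i \<noteq> 0}" unfolding eq c1(3) unfolding c_def by (simp add: sum_negf)
  ultimately show ?case by blast
qed

lemma homog:
  assumes x: "x \<in> Bi k"
  shows "x \<in> addgen (NWk T S sigma k)"
proof -
  obtain c where c: "\<forall>i. c i \<in> addgen (NWk T S sigma i)" "finite {i. c i \<noteq> 0}" "x = sum c {i. c i \<noteq> 0}"
    using decomp[OF all_NW] by blast
  define f where "f = (\<lambda>i. if i = k then x else 0)"
  have uniq: "\<exists>!f. (\<forall>i. f i \<in> Bi i) \<and> finite {i. f i \<noteq> 0} \<and> x = sum f {i. f i \<noteq> 0}"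
    using grad unfolding Z_grading_def by blast
  have Pc: "(\<forall>i. c i \<in> Bi i) \<and> finite {i. c i \<noteq> 0} \<and> x = sum c {i. c i \<noteq> 0}"
    using c addgen_B[OF NWk_B] by blast
  have supf: "{i. f i \<noteq> 0} \<subseteq> {k}" unfolding f_def by auto
  have Pf: "(\<forall>i. f i \<in> Bi i) \<and> finite {i. f i \<noteq> 0} \<and> x = sum f {i. f i \<noteq> 0}"
  proof (intro conjI)
    show "\<forall>i. f i \<in> Bi i" unfolding f_def using x B_zero by auto
    show "finite {i. f i \<noteq> 0}" using supf finite_subset by blast
    show "x = sum f {i. f i \<noteq> 0}" using sum_support_super[OF _ supf] unfolding f_def by simp
  qed
  have "c = f" using uniq Pc Pf by blast
  then have "c k = x" unfolding f_def by simp
  then show ?thesis using c(1) by metis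
qed

end


context sys begin

lemma Theta_lemma:
  assumes "\<Theta> \<in> F_P_Q rQ psi"
  shows "\<exists>a\<in>setmul (range T) (range S). \<forall>x. T (\<Theta> x) = a * T x"
  using assms unfolding F_P_Q_def
proof (induct rule: fungen.induct)
  case (gen f)
  then obtain q p where f: "f = (\<lambda>x. rQ q (psi p x))" by blast
  have "\<forall>x. T (f x) = (T q * S p) * T x" unfolding f by (simp add: T_r S_T mult.assoc)
  moreover have "T q * S p \<in> setmul (range T) (range S)" by (rule setmul_in) auto
  ultimately show ?case by blast
next
  case zero then show ?case using setmul_zero T0 by force
next
  case (add f g)
  then obtain a b where "a \<in> setmul (range T) (range S)" "\<forall>x. T (f x) = a * T x"
    "b \<in> setmul (range T) (range S)" "\<forall>x. T (g x) = b * T x" by blast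
  then show ?case by (intro bexI[of _ "a + b"]) (auto simp: addT distrib_right intro: setmul_add)
next
  case (neg f)
  then obtain a where "a \<in> setmul (range T) (range S)" "\<forall>x. T (f x) = a * T x" by blast
  then show ?case by (intro bexI[of _ "- a"]) (auto simp: Tneg intro: setmul_neg)
qed

lemma Phi_lemma:
  assumes "\<Phi> \<in> F_Q_P lP psi"
  shows "\<exists>b\<in>setmul (range T) (range S). \<forall>y. S (\<Phi> y) = S y * b"
  using assms unfolding F_Q_P_def
proof (induct rule: fungen.induct)
  case (gen f)
  then obtain q p where f: "f = (\<lambda>y. lP (psi y q) p)" by blast
  have "\<forall>y. S (f y) = S y * (T q * S p)" unfolding f by (simp add: S_l S_T mult.assoc)
  moreover have "T q * S p \<in> setmul (range T) (range S)" by (rule setmul_in) auto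
  ultimately show ?case by blast
next
  case zero then show ?case using setmul_zero S0 by force
next
  case (add f g)
  then obtain a b where "a \<in> setmul (range T) (range S)" "\<forall>x. S (f x) = S x * a"
    "b \<in> setmul (range T) (range S)" "\<forall>x. S (g x) = S x * b" by blast
  then show ?case by (intro bexI[of _ "a + b"]) (auto simp: addS distrib_left intro: setmul_add)
next
  case (neg f)
  then obtain a where "a \<in> setmul (range T) (range S)" "\<forall>x. S (f x) = S x * a" by blast
  then show ?case by (intro bexI[of _ "- a"]) (auto simp: Sneg intro: setmul_neg)
qed

lemma FS_T: "finite Qs \<Longrightarrow> \<exists>a\<in>setmul (range T) (range S). \<forall>q\<in>Qs. a * T q = T q"
proof -
  assume "finite Qs"
  then obtain \<Theta> where "\<Theta> \<in> F_P_Q rQ psi" "\<forall>q\<in>Qs. \<Theta> q = q"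
    using FS unfolding condition_FS_def by (metis finite.emptyI)
  with Theta_lemma show ?thesis by metis
qed

lemma FS_S: "finite Ps \<Longrightarrow> \<exists>b\<in>setmul (range T) (range S). \<forall>p\<in>Ps. S p * b = S p"
proof -
  assume "finite Ps"
  then obtain \<Phi> where "\<Phi> \<in> F_Q_P lP psi" "\<forall>p\<in>Ps. \<Phi> p = p"
    using FS unfolding condition_FS_def by (metis finite.emptyI)
  with Phi_lemma show ?thesis by metis
qed

lemma TS_B: "setmul (range T) (range S) \<subseteq> setmul (Bi 1) (Bi (-1))"
  by (rule setmul_mono) (auto intro: TB SB)

lemma sandwich:
  assumes u: "u \<in> Bi i" and v: "v \<in> Bi (-i)" and c: "c \<in> setmul (Bi j) (Bi (-j))"
  shows "u * c * v \<in> setmul (Bi (i + j)) (Bi (- (i + j)))"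
  using c
proof (induct rule: setmul_induct)
  case (gen s t)
  have "u * (s * t) * v = (u * s) * (t * v)" by (simp add: mult.assoc)
  moreover have "u * s \<in> Bi (i + j)" by (rule B_mul[OF u gen(1)]) simp
  moreover have "t * v \<in> Bi (- (i + j))" by (rule B_mul[OF gen(2) v]) simp
  ultimately show ?case by (simp add: setmul_in)
next
  case zero then show ?case by (simp add: setmul_zero)
next
  case (add a b) then show ?case by (simp add: distrib_left distrib_right setmul_add)
next
  case (neg a) then show ?case by (simp add: setmul_neg)
qed

lemma Gleft:
  assumes X: "X \<subseteq> Bi i" and Y: "Y \<subseteq> Bi (-i)" and a: "a \<in> setmul X Y"
    and F: "\<forall>x\<in>F. a * x = x"
    and hyp: "\<And>V. finite V \<Longrightarrow> V \<subseteq> Y \<Longrightarrow> \<exists>c\<in>setmul (Bi j) (Bi (-j)). \<forall>v\<in>V. \<forall>x\<in>F. c * (v * x) = v * x"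
  shows "\<exists>e\<in>setmul (Bi (i + j)) (Bi (- (i + j))). \<forall>x\<in>F. e * x = x"
proof -
  have "\<exists>V. finite V \<and> V \<subseteq> Y \<and> (\<forall>c\<in>setmul (Bi j) (Bi (-j)). (\<forall>v\<in>V. \<forall>x\<in>F. c * (v * x) = v * x) \<longrightarrow>
          (\<exists>e\<in>setmul (Bi (i + j)) (Bi (- (i + j))). \<forall>x\<in>F. e * x = a * x))"
    using a
  proof (induct rule: setmul_induct)
    case (gen u v)
    show ?case
    proof (intro exI[of _ "{v}"] conjI ballI impI)
      fix c assume c: "c \<in> setmul (Bi j) (Bi (-j))" and h: "\<forall>w\<in>{v}. \<forall>x\<in>F. c * (w * x) = w * x"
      have "u * c * v \<in> setmul (Bi (i + j)) (Bi (- (i + j)))"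
        using sandwich[OF _ _ c] gen X Y by blast
      moreover have "\<forall>x\<in>F. u * c * v * x = u * v * x"
        using h by (simp add: mult.assoc)
      ultimately show "\<exists>e\<in>setmul (Bi (i + j)) (Bi (- (i + j))). \<forall>x\<in>F. e * x = u * v * x" by blast
    qed (use gen in auto)
  next
    case zero
    have "(0::'b) \<in> setmul (Bi (i + j)) (Bi (- (i + j)))" by (rule setmul_zero)
    then show ?case by (intro exI[of _ "{}"]) force
  next
    case (add a b)
    then obtain V1 V2 where V1: "finite V1 \<and> V1 \<subseteq> Y \<and> (\<forall>c\<in>setmul (Bi j) (Bi (-j)). (\<forall>v\<in>V1. \<forall>x\<in>F. c * (v * x) = v * x) \<longrightarrow>
          (\<exists>e\<in>setmul (Bi (i + j)) (Bi (- (i + j))). \<forall>x\<in>F. e * x = a * x))"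
      and V2: "finite V2 \<and> V2 \<subseteq> Y \<and> (\<forall>c\<in>setmul (Bi j) (Bi (-j)). (\<forall>v\<in>V2. \<forall>x\<in>F. c * (v * x) = v * x) \<longrightarrow>
          (\<exists>e\<in>setmul (Bi (i + j)) (Bi (- (i + j))). \<forall>x\<in>F. e * x = b * x))" by blast
    show ?case
    proof (intro exI[of _ "V1 \<union> V2"] conjI ballI impI)
      fix c assume c: "c \<in> setmul (Bi j) (Bi (-j))" and h: "\<forall>v\<in>V1 \<union> V2. \<forall>x\<in>F. c * (v * x) = v * x"
      obtain e1 where e1: "e1 \<in> setmul (Bi (i + j)) (Bi (- (i + j)))" "\<forall>x\<in>F. e1 * x = a * x"
        using V1 c h by blast
      obtain e2 where e2: "e2 \<in> setmul (Bi (i + j)) (Bi (- (i + j)))" "\<forall>x\<in>F. e2 * x = b * x"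
        using V2 c h by blast
      show "\<exists>e\<in>setmul (Bi (i + j)) (Bi (- (i + j))). \<forall>x\<in>F. e * x = (a + b) * x"
        by (intro bexI[of _ "e1 + e2"]) (use e1 e2 in \<open>auto simp: distrib_right intro: setmul_add\<close>)
    qed (use V1 V2 in auto)
  next
    case (neg a)
    then obtain V1 where V1: "finite V1 \<and> V1 \<subseteq> Y \<and> (\<forall>c\<in>setmul (Bi j) (Bi (-j)). (\<forall>v\<in>V1. \<forall>x\<in>F. c * (v * x) = v * x) \<longrightarrow>
          (\<exists>e\<in>setmul (Bi (i + j)) (Bi (- (i + j))). \<forall>x\<in>F. e * x = a * x))" by blast
    show ?case
    proof (intro exI[of _ "V1"] conjI ballI impI)
      fix c assume c: "c \<in> setmul (Bi j) (Bi (-j))" and h: "\<forall>v\<in>V1. \<forall>x\<in>F. c * (v * x) = v * x"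
      obtain e1 where e1: "e1 \<in> setmul (Bi (i + j)) (Bi (- (i + j)))" "\<forall>x\<in>F. e1 * x = a * x"
        using V1 c h by blast
      show "\<exists>e\<in>setmul (Bi (i + j)) (Bi (- (i + j))). \<forall>x\<in>F. e * x = (- a) * x"
        by (intro bexI[of _ "- e1"]) (use e1 in \<open>auto intro: setmul_neg\<close>)
    qed (use V1 in auto)
  qed
  then obtain V where V: "finite V" "V \<subseteq> Y" and
    VV: "\<forall>c\<in>setmul (Bi j) (Bi (-j)). (\<forall>v\<in>V. \<forall>x\<in>F. c * (v * x) = v * x) \<longrightarrow>
          (\<exists>e\<in>setmul (Bi (i + j)) (Bi (- (i + j))). \<forall>x\<in>F. e * x = a * x)" by blast
  obtain c where "c \<in> setmul (Bi j) (Bi (-j))" "\<forall>v\<in>V. \<forall>x\<in>F. c * (v * x) = v * x"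
    using hyp[OF V] by blast
  with VV obtain e where "e \<in> setmul (Bi (i + j)) (Bi (- (i + j)))" "\<forall>x\<in>F. e * x = a * x" by blast
  then show ?thesis using F by auto
qed

lemma Gright:
  assumes X: "X \<subseteq> Bi i" and Y: "Y \<subseteq> Bi (-i)" and b: "b \<in> setmul X Y"
    and F: "\<forall>x\<in>F. x * b = x"
    and hyp: "\<And>U. finite U \<Longrightarrow> U \<subseteq> X \<Longrightarrow> \<exists>c\<in>setmul (Bi j) (Bi (-j)). \<forall>u\<in>U. \<forall>x\<in>F. (x * u) * c = x * u"
  shows "\<exists>e\<in>setmul (Bi (i + j)) (Bi (- (i + j))). \<forall>x\<in>F. x * e = x"
proof -
  have "\<exists>U. finite U \<and> U \<subseteq> X \<and> (\<forall>c\<in>setmul (Bi j) (Bi (-j)). (\<forall>u\<in>U. \<forall>x\<in>F. (x * u) * c = x * u) \<longrightarrow>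
          (\<exists>e\<in>setmul (Bi (i + j)) (Bi (- (i + j))). \<forall>x\<in>F. x * e = x * b))"
    using b
  proof (induct rule: setmul_induct)
    case (gen u v)
    show ?case
    proof (intro exI[of _ "{u}"] conjI ballI impI)
      fix c assume c: "c \<in> setmul (Bi j) (Bi (-j))" and h: "\<forall>w\<in>{u}. \<forall>x\<in>F. (x * w) * c = x * w"
      have "u * c * v \<in> setmul (Bi (i + j)) (Bi (- (i + j)))"
        using sandwich[OF _ _ c] gen X Y by blast
      moreover have "\<forall>x\<in>F. x * (u * c * v) = x * (u * v)"
      proof
        fix x assume "x \<in> F"
        then have "x * u * c = x * u" using h by simp
        then show "x * (u * c * v) = x * (u * v)" by (metis mult.assoc)
      qed
      ultimately show "\<exists>e\<in>setmul (Bi (i + j)) (Bi (- (i + j))). \<forall>x\<in>F. x * e = x * (u * v)" by blast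
    qed (use gen in auto)
  next
    case zero
    have "(0::'b) \<in> setmul (Bi (i + j)) (Bi (- (i + j)))" by (rule setmul_zero)
    then show ?case by (intro exI[of _ "{}"]) force
  next
    case (add a b)
    then obtain V1 V2 where V1: "finite V1 \<and> V1 \<subseteq> X \<and> (\<forall>c\<in>setmul (Bi j) (Bi (-j)). (\<forall>u\<in>V1. \<forall>x\<in>F. (x * u) * c = x * u) \<longrightarrow>
          (\<exists>e\<in>setmul (Bi (i + j)) (Bi (- (i + j))). \<forall>x\<in>F. x * e = x * a))"
      and V2: "finite V2 \<and> V2 \<subseteq> X \<and> (\<forall>c\<in>setmul (Bi j) (Bi (-j)). (\<forall>u\<in>V2. \<forall>x\<in>F. (x * u) * c = x * u) \<longrightarrow>
          (\<exists>e\<in>setmul (Bi (i + j)) (Bi (- (i + j))). \<forall>x\<in>F. x * e = x * b))" by blast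
    show ?case
    proof (intro exI[of _ "V1 \<union> V2"] conjI ballI impI)
      fix c assume c: "c \<in> setmul (Bi j) (Bi (-j))" and h: "\<forall>u\<in>V1 \<union> V2. \<forall>x\<in>F. (x * u) * c = x * u"
      obtain e1 where e1: "e1 \<in> setmul (Bi (i + j)) (Bi (- (i + j)))" "\<forall>x\<in>F. x * e1 = x * a"
        using V1 c h by blast
      obtain e2 where e2: "e2 \<in> setmul (Bi (i + j)) (Bi (- (i + j)))" "\<forall>x\<in>F. x * e2 = x * b"
        using V2 c h by blast
      show "\<exists>e\<in>setmul (Bi (i + j)) (Bi (- (i + j))). \<forall>x\<in>F. x * e = x * (a + b)"
        by (intro bexI[of _ "e1 + e2"]) (use e1 e2 in \<open>auto simp: distrib_left intro: setmul_add\<close>)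
    qed (use V1 V2 in auto)
  next
    case (neg a)
    then obtain V1 where V1: "finite V1 \<and> V1 \<subseteq> X \<and> (\<forall>c\<in>setmul (Bi j) (Bi (-j)). (\<forall>u\<in>V1. \<forall>x\<in>F. (x * u) * c = x * u) \<longrightarrow>
          (\<exists>e\<in>setmul (Bi (i + j)) (Bi (- (i + j))). \<forall>x\<in>F. x * e = x * a))" by blast
    show ?case
    proof (intro exI[of _ "V1"] conjI ballI impI)
      fix c assume c: "c \<in> setmul (Bi j) (Bi (-j))" and h: "\<forall>u\<in>V1. \<forall>x\<in>F. (x * u) * c = x * u"
      obtain e1 where e1: "e1 \<in> setmul (Bi (i + j)) (Bi (- (i + j)))" "\<forall>x\<in>F. x * e1 = x * a"
        using V1 c h by blast
      show "\<exists>e\<in>setmul (Bi (i + j)) (Bi (- (i + j))). \<forall>x\<in>F. x * e = x * (- a)"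
        by (intro bexI[of _ "- e1"]) (use e1 in \<open>auto intro: setmul_neg\<close>)
    qed (use V1 in auto)
  qed
  then obtain U where U: "finite U" "U \<subseteq> X" and
    UU: "\<forall>c\<in>setmul (Bi j) (Bi (-j)). (\<forall>u\<in>U. \<forall>x\<in>F. (x * u) * c = x * u) \<longrightarrow>
          (\<exists>e\<in>setmul (Bi (i + j)) (Bi (- (i + j))). \<forall>x\<in>F. x * e = x * b)" by blast
  obtain c where "c \<in> setmul (Bi j) (Bi (-j))" "\<forall>u\<in>U. \<forall>x\<in>F. (x * u) * c = x * u"
    using hyp[OF U] by blast
  with UU obtain e where "e \<in> setmul (Bi (i + j)) (Bi (- (i + j)))" "\<forall>x\<in>F. x * e = x * b" by blast
  then show ?thesis using F by auto
qed

end


context sys begin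

lemma S_T_mul: "S p * (T q * z) = sigma (psi p q) * z"
  by (simp add: S_T mult.assoc)

lemma sig_Tl: "sigma r * (T q * z) = T (lQ r q) * z"
  by (simp add: T_l mult.assoc)

lemma claimL:
  "finite F \<Longrightarrow> F \<subseteq> {Tl T qs y | qs y. length qs = Suc n} \<Longrightarrow>
   \<exists>a\<in>setmul (Bi (int (Suc n))) (Bi (- int (Suc n))). \<forall>x\<in>F. a * x = x"
proof (induct n arbitrary: F)
  case 0
  have "\<forall>x\<in>F. \<exists>z. x = T (fst z) * snd z"
  proof
    fix x assume "x \<in> F"
    then obtain qs y where "x = Tl T qs y" "length qs = Suc 0" using 0 by blast
    then obtain q where "x = T q * y" by (cases qs) auto
    then show "\<exists>z. x = T (fst z) * snd z" by (intro exI[of _ "(q, y)"]) simp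
  qed
  then obtain g where g: "\<forall>x\<in>F. x = T (fst (g x)) * snd (g x)" by metis
  obtain a where a: "a \<in> setmul (range T) (range S)" "\<forall>q\<in>(\<lambda>x. fst (g x)) ` F. a * T q = T q"
    using FS_T[of "(\<lambda>x. fst (g x)) ` F"] 0 by blast
  have "\<forall>x\<in>F. a * x = x"
  proof
    fix x assume x: "x \<in> F"
    then have "a * T (fst (g x)) = T (fst (g x))" using a by auto
    then show "a * x = x" using g x by (metis mult.assoc)
  qed
  moreover have "a \<in> setmul (Bi (int (Suc 0))) (Bi (- int (Suc 0)))" using a TS_B by auto
  ultimately show ?case by blast
next
  case (Suc m)
  have "\<forall>x\<in>F. \<exists>z. x = T (fst z) * Tl T (fst (snd z)) (snd (snd z)) \<and> length (fst (snd z)) = Suc m"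
  proof
    fix x assume "x \<in> F"
    then obtain qs y where "x = Tl T qs y" "length qs = Suc (Suc m)" using Suc by blast
    then obtain q qs' where "x = T q * Tl T qs' y" "length qs' = Suc m" by (cases qs) auto
    then show "\<exists>z. x = T (fst z) * Tl T (fst (snd z)) (snd (snd z)) \<and> length (fst (snd z)) = Suc m"
      by (intro exI[of _ "(q, qs', y)"]) simp
  qed
  then obtain g where g: "\<forall>x\<in>F. x = T (fst (g x)) * Tl T (fst (snd (g x))) (snd (snd (g x)))
     \<and> length (fst (snd (g x))) = Suc m" by metis
  obtain a where a: "a \<in> setmul (range T) (range S)" "\<forall>q\<in>(\<lambda>x. fst (g x)) ` F. a * T q = T q"
    using FS_T[of "(\<lambda>x. fst (g x)) ` F"] Suc by blast
  have aF: "\<forall>x\<in>F. a * x = x"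
  proof
    fix x assume x: "x \<in> F"
    then have "a * T (fst (g x)) = T (fst (g x))" using a by auto
    then show "a * x = x" using g x by (metis mult.assoc)
  qed
  have "\<exists>e\<in>setmul (Bi (1 + int (Suc m))) (Bi (- (1 + int (Suc m)))). \<forall>x\<in>F. e * x = x"
  proof (rule Gleft[OF _ _ a(1) aF])
    show "range T \<subseteq> Bi 1" using TB by auto
    show "range S \<subseteq> Bi (- 1)" using SB by auto
    fix V assume V: "finite V" "V \<subseteq> range S"
    define W where "W = (\<lambda>(v, x). v * x) ` (V \<times> F)"
    have fW: "finite W" unfolding W_def using V Suc by auto
    have "W \<subseteq> {Tl T qs y | qs y. length qs = Suc m}"
    proof
      fix w assume "w \<in> W"
      then obtain v x where vx: "v \<in> V" "x \<in> F" "w = v * x" unfolding W_def by auto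
      then obtain p where p: "v = S p" using V by auto
      obtain q0 qs y where gx: "x = T q0 * Tl T qs y" "length qs = Suc m" using g vx by blast
      then obtain q2 qs'' where qs: "qs = q2 # qs''" by (cases qs) auto
      have "w = Tl T (lQ (psi p q0) q2 # qs'') y"
        unfolding vx p gx qs by (simp add: S_T_mul sig_Tl)
      then show "w \<in> {Tl T qs y | qs y. length qs = Suc m}" using gx qs by fastforce
    qed
    from Suc(1)[OF fW this] obtain c where c: "c \<in> setmul (Bi (int (Suc m))) (Bi (- int (Suc m)))"
      "\<forall>w\<in>W. c * w = w" by blast
    have "\<forall>v\<in>V. \<forall>x\<in>F. c * (v * x) = v * x" using c(2) unfolding W_def by auto
    then show "\<exists>c\<in>setmul (Bi (int (Suc m))) (Bi (- int (Suc m))). \<forall>v\<in>V. \<forall>x\<in>F. c * (v * x) = v * x"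
      using c(1) by blast
  qed
  moreover have "1 + int (Suc m) = int (Suc (Suc m))" by simp
  ultimately show ?case by metis
qed

lemma claimR:
  "finite F \<Longrightarrow> F \<subseteq> {Sr S y ps | y ps. length ps = Suc n} \<Longrightarrow>
   \<exists>b\<in>setmul (Bi (int (Suc n))) (Bi (- int (Suc n))). \<forall>x\<in>F. x * b = x"
proof (induct n arbitrary: F)
  case 0
  have "\<forall>x\<in>F. \<exists>z. x = fst z * S (snd z)"
  proof
    fix x assume "x \<in> F"
    then obtain ps y where "x = Sr S y ps" "length ps = Suc 0" using 0 by blast
    then obtain p where "x = y * S p" by (cases ps) auto
    then show "\<exists>z. x = fst z * S (snd z)" by (intro exI[of _ "(y, p)"]) simp
  qed
  then obtain g where g: "\<forall>x\<in>F. x = fst (g x) * S (snd (g x))" by metis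
  obtain b where b: "b \<in> setmul (range T) (range S)" "\<forall>p\<in>(\<lambda>x. snd (g x)) ` F. S p * b = S p"
    using FS_S[of "(\<lambda>x. snd (g x)) ` F"] 0 by blast
  have "\<forall>x\<in>F. x * b = x"
  proof
    fix x assume x: "x \<in> F"
    then have "S (snd (g x)) * b = S (snd (g x))" using b by auto
    then show "x * b = x" using g x by (metis mult.assoc)
  qed
  moreover have "b \<in> setmul (Bi (int (Suc 0))) (Bi (- int (Suc 0)))" using b TS_B by auto
  ultimately show ?case by blast
next
  case (Suc m)
  have "\<forall>x\<in>F. \<exists>z. x = Sr S (fst z) (fst (snd z)) * S (snd (snd z)) \<and> length (fst (snd z)) = Suc m"
  proof
    fix x assume "x \<in> F"
    then obtain ps y where "x = Sr S y ps" "length ps = Suc (Suc m)" using Suc by blast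
    then obtain p ps' where "x = Sr S y ps' * S p" "length ps' = Suc m"
      by (cases ps rule: rev_cases) (auto simp: Sr_snoc)
    then show "\<exists>z. x = Sr S (fst z) (fst (snd z)) * S (snd (snd z)) \<and> length (fst (snd z)) = Suc m"
      by (intro exI[of _ "(y, ps', p)"]) simp
  qed
  then obtain g where g: "\<forall>x\<in>F. x = Sr S (fst (g x)) (fst (snd (g x))) * S (snd (snd (g x)))
     \<and> length (fst (snd (g x))) = Suc m" by metis
  obtain b where b: "b \<in> setmul (range T) (range S)" "\<forall>p\<in>(\<lambda>x. snd (snd (g x))) ` F. S p * b = S p"
    using FS_S[of "(\<lambda>x. snd (snd (g x))) ` F"] Suc by blast
  have bF: "\<forall>x\<in>F. x * b = x"
  proof
    fix x assume x: "x \<in> F"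
    then have "S (snd (snd (g x))) * b = S (snd (snd (g x)))" using b by auto
    then show "x * b = x" using g x by (metis mult.assoc)
  qed
  have "\<exists>e\<in>setmul (Bi (1 + int (Suc m))) (Bi (- (1 + int (Suc m)))). \<forall>x\<in>F. x * e = x"
  proof (rule Gright[OF _ _ b(1) bF])
    show "range T \<subseteq> Bi 1" using TB by auto
    show "range S \<subseteq> Bi (- 1)" using SB by auto
    fix U assume U: "finite U" "U \<subseteq> range T"
    define W where "W = (\<lambda>(u, x). x * u) ` (U \<times> F)"
    have fW: "finite W" unfolding W_def using U Suc by auto
    have "W \<subseteq> {Sr S y ps | y ps. length ps = Suc m}"
    proof
      fix w assume "w \<in> W"
      then obtain u x where ux: "u \<in> U" "x \<in> F" "w = x * u" unfolding W_def by auto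
      then obtain q where q: "u = T q" using U by auto
      obtain y ps p0 where gx: "x = Sr S y ps * S p0" "length ps = Suc m" using g ux by blast
      then obtain p2 ps'' where ps: "ps = ps'' @ [p2]" by (cases ps rule: rev_cases) auto
      have "w = Sr S y ps'' * (S p2 * (S p0 * T q))"
        unfolding ux q gx ps by (simp add: Sr_snoc mult.assoc)
      also have "\<dots> = Sr S y (ps'' @ [rP p2 (psi p0 q)])"
        by (simp add: Sr_snoc S_r S_T)
      finally show "w \<in> {Sr S y ps | y ps. length ps = Suc m}" using gx ps by fastforce
    qed
    from Suc(1)[OF fW this] obtain c where c: "c \<in> setmul (Bi (int (Suc m))) (Bi (- int (Suc m)))"
      "\<forall>w\<in>W. w * c = w" by blast
    have "\<forall>u\<in>U. \<forall>x\<in>F. (x * u) * c = x * u" using c(2) unfolding W_def by auto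
    then show "\<exists>c\<in>setmul (Bi (int (Suc m))) (Bi (- int (Suc m))). \<forall>u\<in>U. \<forall>x\<in>F. (x * u) * c = x * u"
      using c(1) by blast
  qed
  moreover have "1 + int (Suc m) = int (Suc (Suc m))" by simp
  ultimately show ?case by metis
qed

end


context sys begin

lemma NW_pos_form:
  assumes "x \<in> NWk T S sigma (int (Suc n))"
  shows "x \<in> {Tl T qs y | qs y. length qs = Suc n}"
proof -
  obtain qs r ps where x: "x = Tl T qs (Sr S (sigma r) ps)" and k: "int (length qs) - int (length ps) = int (Suc n)"
    using assms unfolding NWk_def nw_def by blast
  have len: "length (take (Suc n) qs) = Suc n" using k by simp
  have "x = Tl T (take (Suc n) qs) (Tl T (drop (Suc n) qs) (Sr S (sigma r) ps))"
    unfolding x Tl_append[symmetric] by simp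
  then show ?thesis using len by blast
qed

lemma NW_neg_form:
  assumes "x \<in> NWk T S sigma (- int (Suc n))"
  shows "x \<in> {Sr S y ps | y ps. length ps = Suc n}"
proof -
  obtain qs r ps where x: "x = Tl T qs (Sr S (sigma r) ps)" and k: "int (length qs) - int (length ps) = - int (Suc n)"
    using assms unfolding NWk_def nw_def by blast
  have len: "length (drop (length qs) ps) = Suc n" using k by simp
  have "x = Sr S (Sr S (Tl T qs (sigma r)) (take (length qs) ps)) (drop (length qs) ps)"
    unfolding x Tl_Sr Sr_append[symmetric] by simp
  then show ?thesis using len by blast
qed

lemma LU_pos:
  assumes "x \<in> Bi (int (Suc n))"
  shows "\<exists>a\<in>setmul (Bi (int (Suc n))) (Bi (- int (Suc n))). a * x = x"
proof -
  obtain F where F: "finite F" "F \<subseteq> NWk T S sigma (int (Suc n))"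
    "\<forall>a. (\<forall>g\<in>F. a * g = g) \<longrightarrow> a * x = x"
    using addgen_left_unit[OF homog[OF assms]] by blast
  have "F \<subseteq> {Tl T qs y | qs y. length qs = Suc n}" using F(2) NW_pos_form by blast
  from claimL[OF F(1) this] F(3) show ?thesis by blast
qed

lemma RU_neg:
  assumes "x \<in> Bi (- int (Suc n))"
  shows "\<exists>b\<in>setmul (Bi (int (Suc n))) (Bi (- int (Suc n))). x * b = x"
proof -
  obtain F where F: "finite F" "F \<subseteq> NWk T S sigma (- int (Suc n))"
    "\<forall>a. (\<forall>g\<in>F. g * a = g) \<longrightarrow> x * a = x"
    using addgen_right_unit[OF homog[OF assms]] by blast
  have "F \<subseteq> {Sr S y ps | y ps. length ps = Suc n}" using F(2) NW_neg_form by blast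
  from claimR[OF F(1) this] F(3) show ?thesis by blast
qed

lemma I_mul:
  assumes "x \<in> setmul (Bi (- i)) (Bi i)" "y \<in> setmul (Bi (- i)) (Bi i)"
  shows "x * y \<in> setmul (Bi (- i)) (Bi i)"
  using assms unfolding setmul_def
proof (rule addgen_bilinear)
  fix a b assume "a \<in> {x * y |x y. x \<in> Bi (- i) \<and> y \<in> Bi i}" "b \<in> {x * y |x y. x \<in> Bi (- i) \<and> y \<in> Bi i}"
  then obtain s t s' t' where st: "a = s * t" "b = s' * t'" "s \<in> Bi (- i)" "t \<in> Bi i" "s' \<in> Bi (- i)" "t' \<in> Bi i"
    by blast
  have "t * s' \<in> Bi 0" by (rule B_mul[OF st(4) st(5)]) simp
  then have "t * s' * t' \<in> Bi i" by (rule B_mul[OF _ st(6)]) simp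
  moreover have "a * b = s * (t * s' * t')" unfolding st by (simp add: mult.assoc)
  ultimately show "a * b \<in> addgen {x * y |x y. x \<in> Bi (- i) \<and> y \<in> Bi i}"
    using st(3) by (auto intro: addgen.gen)
qed

lemma RU_pos:
  assumes x: "x \<in> Bi i" and a: "a \<in> setmul (Bi i) (Bi (- i))" and ax: "a * x = x"
    and su: "s_unital_set (setmul (Bi (- i)) (Bi i))"
  shows "\<exists>b\<in>setmul (Bi (- i)) (Bi i). x * b = x"
proof -
  let ?I = "setmul (Bi (- i)) (Bi i)"
  have "\<exists>V. finite V \<and> V \<subseteq> ?I \<and> (\<forall>b. (\<forall>v\<in>V. v * b = v) \<longrightarrow> a * x * b = a * x)"
    using a
  proof (induct rule: setmul_induct)
    case (gen u v)
    have "v * x \<in> ?I" using gen x by (simp add: setmul_in)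
    moreover have "\<forall>b. (\<forall>w\<in>{v * x}. w * b = w) \<longrightarrow> u * v * x * b = u * v * x"
      by (simp add: mult.assoc)
    ultimately show ?case by (intro exI[of _ "{v * x}"]) auto
  next
    case zero then show ?case by (intro exI[of _ "{}"]) auto
  next
    case (add a1 a2)
    then obtain V1 V2 where "finite V1 \<and> V1 \<subseteq> ?I \<and> (\<forall>b. (\<forall>v\<in>V1. v * b = v) \<longrightarrow> a1 * x * b = a1 * x)"
      "finite V2 \<and> V2 \<subseteq> ?I \<and> (\<forall>b. (\<forall>v\<in>V2. v * b = v) \<longrightarrow> a2 * x * b = a2 * x)" by blast
    then show ?case by (intro exI[of _ "V1 \<union> V2"]) (auto simp: distrib_right)
  next
    case (neg a1)
    then obtain V1 where "finite V1 \<and> V1 \<subseteq> ?I \<and> (\<forall>b. (\<forall>v\<in>V1. v * b = v) \<longrightarrow> a1 * x * b = a1 * x)" by blast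
    then show ?case by (intro exI[of _ "V1"]) auto
  qed
  then obtain V where V: "finite V" "V \<subseteq> ?I" "\<forall>b. (\<forall>v\<in>V. v * b = v) \<longrightarrow> a * x * b = a * x" by blast
  obtain b where b: "b \<in> ?I" "\<forall>v\<in>V. v * b = v"
    using common_right_unit[OF su setmul_zero setmul_add setmul_neg I_mul V(1,2)] by blast
  then show ?thesis using V(3) ax by metis
qed

lemma LU_neg:
  assumes x: "x \<in> Bi (- i)" and b: "b \<in> setmul (Bi i) (Bi (- i))" and xb: "x * b = x"
    and su: "s_unital_set (setmul (Bi (- i)) (Bi i))"
  shows "\<exists>a\<in>setmul (Bi (- i)) (Bi i). a * x = x"
proof -
  let ?I = "setmul (Bi (- i)) (Bi i)"
  have "\<exists>V. finite V \<and> V \<subseteq> ?I \<and> (\<forall>c. (\<forall>v\<in>V. c * v = v) \<longrightarrow> c * (x * b) = x * b)"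
    using b
  proof (induct rule: setmul_induct)
    case (gen u v)
    have "x * u \<in> ?I" using gen x by (simp add: setmul_in)
    moreover have "\<forall>c. (\<forall>w\<in>{x * u}. c * w = w) \<longrightarrow> c * (x * (u * v)) = x * (u * v)"
      by (simp add: mult.assoc[symmetric])
    ultimately show ?case by (intro exI[of _ "{x * u}"]) auto
  next
    case zero then show ?case by (intro exI[of _ "{}"]) auto
  next
    case (add a1 a2)
    then obtain V1 V2 where "finite V1 \<and> V1 \<subseteq> ?I \<and> (\<forall>c. (\<forall>v\<in>V1. c * v = v) \<longrightarrow> c * (x * a1) = x * a1)"
      "finite V2 \<and> V2 \<subseteq> ?I \<and> (\<forall>c. (\<forall>v\<in>V2. c * v = v) \<longrightarrow> c * (x * a2) = x * a2)" by blast
    then show ?case by (intro exI[of _ "V1 \<union> V2"]) (auto simp: distrib_left)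
  next
    case (neg a1)
    then obtain V1 where "finite V1 \<and> V1 \<subseteq> ?I \<and> (\<forall>c. (\<forall>v\<in>V1. c * v = v) \<longrightarrow> c * (x * a1) = x * a1)" by blast
    then show ?case by (intro exI[of _ "V1"]) auto
  qed
  then obtain V where V: "finite V" "V \<subseteq> ?I" "\<forall>c. (\<forall>v\<in>V. c * v = v) \<longrightarrow> c * (x * b) = x * b" by blast
  obtain c where c: "c \<in> ?I" "\<forall>v\<in>V. c * v = v"
    using common_left_unit[OF su setmul_zero setmul_add setmul_neg I_mul V(1,2)] by blast
  then show ?thesis using V(3) xb by metis
qed

lemma deg0: "x \<in> Bi 0 \<Longrightarrow> x \<in> setmul (Bi 0) (Bi 0)"
proof -
  assume "x \<in> Bi 0"
  then have "x \<in> addgen (NWk T S sigma 0)" by (rule homog)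
  moreover have "NWk T S sigma 0 \<subseteq> setmul (Bi 0) (Bi 0)"
  proof
    fix w assume w: "w \<in> NWk T S sigma 0"
    then obtain qs r ps where wd: "w = Tl T qs (Sr S (sigma r) ps)" and k: "int (length qs) - int (length ps) = 0"
      unfolding NWk_def nw_def by blast
    have "\<exists>r0. sigma r0 * w = w"
    proof (cases qs)
      case Nil
      then have "ps = []" using k by simp
      then have "w = sigma r" using wd Nil by simp
      moreover obtain r0 where "r0 * r = r" using suR by blast
      ultimately show ?thesis by (metis sig_mul)
    next
      case (Cons q qs')
      obtain r0 where r0: "lQ r0 q = q" using suQl by blast
      have "sigma r0 * w = T (lQ r0 q) * Tl T qs' (Sr S (sigma r) ps)"
        unfolding wd Cons by (simp add: sig_Tl)
      then show ?thesis unfolding r0 wd Cons by auto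
    qed
    then obtain r0 where "sigma r0 * w = w" by blast
    moreover have "w \<in> Bi 0" using w NWk_B by blast
    ultimately show "w \<in> setmul (Bi 0) (Bi 0)" by (metis sB setmul_in)
  qed
  ultimately show "x \<in> setmul (Bi 0) (Bi 0)"
    using addgen_least[OF _ setmul_zero setmul_add setmul_neg] by blast
qed

lemma result: "nearly_epsilon_strongly_graded Bi"
  unfolding nearly_epsilon_strongly_graded_def
proof (rule conjI[OF grad], intro allI ballI)
  fix i x assume x: "x \<in> Bi i"
  show "(\<exists>a\<in>setmul (Bi i) (Bi (- i)). a * x = x) \<and> (\<exists>b\<in>setmul (Bi (- i)) (Bi i). x * b = x)"
  proof (cases "i = 0")
    case True
    have su: "s_unital_set (setmul (Bi 0) (Bi 0))" using sf[of 0] by simp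
    have "x \<in> setmul (Bi 0) (Bi 0)" using x True deg0 by simp
    then show ?thesis using su True unfolding s_unital_set_def by auto
  next
    case False
    show ?thesis
    proof (cases "i > 0")
      case True
      define n where "n = nat i - 1"
      have i: "i = int (Suc n)" unfolding n_def using True by simp
      obtain a where a: "a \<in> setmul (Bi i) (Bi (- i))" "a * x = x" using LU_pos x i by blast
      have su: "s_unital_set (setmul (Bi (- i)) (Bi i))" using sf[of "Suc n"] i by simp
      from RU_pos[OF x a su] a show ?thesis by blast
    next
      case False
      define n where "n = nat (- i) - 1"
      have i: "i = - int (Suc n)" unfolding n_def using False \<open>i \<noteq> 0\<close> by simp
      have x': "x \<in> Bi (- int (Suc n))" using x i by simp
      obtain b where b: "b \<in> setmul (Bi (int (Suc n))) (Bi (- int (Suc n)))" "x * b = x" using RU_neg[OF x'] by blast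
      have su: "s_unital_set (setmul (Bi (- int (Suc n))) (Bi (int (Suc n))))" using sf[of "Suc n"] by simp
      obtain a where a: "a \<in> setmul (Bi (- int (Suc n))) (Bi (int (Suc n)))" "a * x = x"
        using LU_neg[OF x' b su] by blast
      have mi: "- i = int (Suc n)" using i by simp
      have "(\<exists>a\<in>setmul (Bi i) (Bi (- i)). a * x = x)" using a unfolding mi i[symmetric] by blast
      moreover have "(\<exists>b\<in>setmul (Bi (- i)) (Bi i). x * b = x)" using b unfolding mi i[symmetric] by blast
      ultimately show ?thesis by blast
    qed
  qed
qed

end
theorem mainTheorem8:
  fixes lP :: "'r::ring \<Rightarrow> 'p::ab_group_add \<Rightarrow> 'p" and rP :: "'p \<Rightarrow> 'r \<Rightarrow> 'p"
    and lQ :: "'r \<Rightarrow> 'q::ab_group_add \<Rightarrow> 'q" and rQ :: "'q \<Rightarrow> 'r \<Rightarrow> 'q"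
    and psi :: "'p \<Rightarrow> 'q \<Rightarrow> 'r"
    and S :: "'p \<Rightarrow> 'b::ring" and T :: "'q \<Rightarrow> 'b" and sigma :: "'r \<Rightarrow> 'b"
    and Bi :: "int \<Rightarrow> 'b set"
  assumes "s_unital_ring TYPE('r)"
    and "s_unital_R_system lP rP lQ rQ psi"
    and "semi_full lP rP lQ rQ psi S T sigma Bi"
    and "condition_FS lP rQ psi"
    and "\<forall>k. s_unital_set (I_k Bi sigma rP psi k)"
  shows "nearly_epsilon_strongly_graded Bi"
proof -
  note a = assms
  have su: "s_unital_bimodule lP rP" "s_unital_bimodule lQ rQ"
    using a(2) unfolding s_unital_R_system_def by auto
  have g: "graded_cov_rep lP rP lQ rQ psi S T sigma Bi" and
    eq: "\<forall>k::nat. setmul (Bi (- int k)) (Bi (int k)) = I_k Bi sigma rP psi k"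
    using a(3) unfolding semi_full_def by auto
  have cr: "covariant_rep lP rP lQ rQ psi S T sigma" using g unfolding graded_cov_rep_def by auto
  have "sys lP rP lQ rQ psi S T sigma Bi"
  proof (unfold_locales)
    show "\<And>r::'r. \<exists>a. a * r = r" using a(1) unfolding s_unital_ring_def by blast
    show "\<And>p. \<exists>r. lP r p = p" using su(1) unfolding s_unital_bimodule_def by blast
    show "\<And>q. \<exists>r. lQ r q = q" using su(2) unfolding s_unital_bimodule_def by blast
    show "\<And>q. \<exists>r. rQ q r = q" using su(2) unfolding s_unital_bimodule_def by blast
    show "\<And>x y. S (x + y) = S x + S y" using cr unfolding covariant_rep_def additive_def by blast
    show "\<And>x y. T (x + y) = T x + T y" using cr unfolding covariant_rep_def additive_def by blast
    show "\<And>x y. sigma (x * y) = sigma x * sigma y" using cr unfolding covariant_rep_def ring_hom_nu_def by blast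
    show "\<And>p r. S (rP p r) = S p * sigma r" using cr unfolding covariant_rep_def by blast
    show "\<And>r p. S (lP r p) = sigma r * S p" using cr unfolding covariant_rep_def by blast
    show "\<And>q r. T (rQ q r) = T q * sigma r" using cr unfolding covariant_rep_def by blast
    show "\<And>r q. T (lQ r q) = sigma r * T q" using cr unfolding covariant_rep_def by blast
    show "\<And>p q. sigma (psi p q) = S p * T q" using cr unfolding covariant_rep_def by blast
    show "subring_gen (range sigma \<union> range S \<union> range T) = UNIV" using g unfolding graded_cov_rep_def by blast
    show "Z_grading Bi" using g unfolding graded_cov_rep_def by blast
    show "\<And>r. sigma r \<in> Bi 0" using g unfolding graded_cov_rep_def by blast
    show "\<And>q. T q \<in> Bi 1" using g unfolding graded_cov_rep_def by blast
    show "\<And>p. S p \<in> Bi (-1)" using g unfolding graded_cov_rep_def by blast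
    show "\<And>k::nat. s_unital_set (setmul (Bi (- int k)) (Bi (int k)))" using eq a(5) by simp
    show "condition_FS lP rQ psi" by (rule a(4))
  qed
  then show ?thesis by (rule sys.result)
qed

end
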